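(* Let $\mathcal{X}=\mathcal{Y}=\mathcal{A}=\mathcal{B}=\{0,1\}$ and $\epsilon\in[0,1)$. Then the inequality $$(1-\epsilon)\,p(00|00)+\epsilon(1-\epsilon)\,p(11|00)-p(01|01)-p(10|10)-p(00|11)\le\epsilon(1-\epsilon)$$ is valid for every $p\in\mathcal{P}_2^{AB,(\epsilon,\epsilon)}$ and defines a facet of this polytope, i.e. the set of points of $\mathcal{P}_2^{AB,(\epsilon,\epsilon)}$ attaining equality has affine dimension $\dim\mathcal{P}_2^{AB,(\epsilon,\epsilon)}-1$ (for $\epsilon\in(0,1)$ the polytope has dimension $12$).
   Context: Here $p(ab|xy)$ denotes the probability of outputs $(a,b)$ given inputs $(x,y)$. $\mathcal{P}_2^{AB,(\epsilon,\epsilon)}\subset\mathbb{R}^{16}$ is the set of all conditional distributions $p$ for which there exist a probability space $(\Lambda,q)$ and distributions $p_A(\cdot|x,y,\lambda)$ on $\{0,1\}$, $p_B(\cdot|x,y,\lambda)$ on $\{0,1\}$ with $p(ab|xy)=\int q(d\lambda)p_A(a|xy\lambda)p_B(b|xy\lambda)$ for all $a,b,x,y$, $\frac12\sum_a|p_A(a|xy\lambda)-p_A(a|xy'\lambda)|\le\epsilon$ for all $x,y,y',\lambda$, and $\frac12\sum_b|p_B(b|xy\lambda)-p_B(b|x'y\lambda)|\le\epsilon$ for all $y,x,x',\lambda$. It is a convex polytope. *)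

theory Defs
  imports "HOL-Probability.Probability"
begin

text \<open>Behaviours p(ab|xy) with a,b,x,y in {0,1} are points of real^16, encoded as
  p $ a $ b $ x $ y with indices of the two-element numeral type 2 (elements 0 and 1).\<close>

type_synonym behaviour = "real^2^2^2^2"

definition pr :: "behaviour \<Rightarrow> 2 \<Rightarrow> 2 \<Rightarrow> 2 \<Rightarrow> 2 \<Rightarrow> real" where
  "pr p a b x y = p $ a $ b $ x $ y"

text \<open>Local response distributions: pA x y l a = p_A(a|x y l), pB x y l b = p_B(b|x y l).
  The hidden variable space is a probability space on the (standard Borel) type real.\<close>

definition PAB :: "real \<Rightarrow> behaviour set" where
  "PAB \<epsilon> = {p. \<exists>(M::real measure) (pA :: 2 \<Rightarrow> 2 \<Rightarrow> real \<Rightarrow> 2 \<Rightarrow> real)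
                                  (pB :: 2 \<Rightarrow> 2 \<Rightarrow> real \<Rightarrow> 2 \<Rightarrow> real).
      prob_space M \<and>
      (\<forall>x y a. (\<lambda>l. pA x y l a) \<in> borel_measurable M) \<and>
      (\<forall>x y b. (\<lambda>l. pB x y l b) \<in> borel_measurable M) \<and>
      (\<forall>x y. \<forall>l\<in>space M. (\<forall>a. pA x y l a \<ge> 0) \<and> (\<Sum>a\<in>UNIV. pA x y l a) = 1) \<and>
      (\<forall>x y. \<forall>l\<in>space M. (\<forall>b. pB x y l b \<ge> 0) \<and> (\<Sum>b\<in>UNIV. pB x y l b) = 1) \<and>
      (\<forall>a b x y. pr p a b x y = (\<integral>l. pA x y l a * pB x y l b \<partial>M)) \<and>
      (\<forall>x y y'. \<forall>l\<in>space M. (1/2) * (\<Sum>a\<in>UNIV. \<bar>pA x y l a - pA x y' l a\<bar>) \<le> \<epsilon>) \<and>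
      (\<forall>y x x'. \<forall>l\<in>space M. (1/2) * (\<Sum>b\<in>UNIV. \<bar>pB x y l b - pB x' y l b\<bar>) \<le> \<epsilon>)}"

definition ineq_lhs :: "real \<Rightarrow> behaviour \<Rightarrow> real" where
  "ineq_lhs \<epsilon> p = (1 - \<epsilon>) * pr p 0 0 0 0 + \<epsilon> * (1 - \<epsilon>) * pr p 1 1 0 0
      - pr p 0 1 0 1 - pr p 1 0 1 0 - pr p 0 0 1 1"

end

theory Submission
  imports Defs
begin


lemma core_g:
  fixes e m c d :: real
  assumes "0 \<le> m" "m \<le> 1 - e" "e < 1" "0 \<le> c" "c \<le> 1" "0 \<le> d" "d \<le> 1"
  shows "m * (1 - e) \<le> m * (1 - d) + m * (1 - c) + max 0 (c - e) * max 0 (d - e)"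
proof (cases "c \<le> e \<or> d \<le> e")
  case True
  then show ?thesis using assms
    by (smt (verit) mult_left_mono mult_nonneg_nonneg)
next
  case False
  define s where "s = c - e"
  define t where "t = d - e"
  define L where "L = 1 - e"
  have sp: "0 \<le> s" "s \<le> L" "0 \<le> t" "t \<le> L" "0 < L" using False assms by (auto simp: s_def t_def L_def)
  have id: "L * (s * t - m * (s + t) + m * L) = m * (L - s) * (L - t) + (L - m) * s * t"
    by (simp add: algebra_simps)
  have "0 \<le> m * (L - s) * (L - t) + (L - m) * s * t"
    using sp assms by (simp add: L_def)
  then have "0 \<le> s * t - m * (s + t) + m * L" using id sp
    by (metis zero_le_mult_iff not_less)
  then show ?thesis using False unfolding s_def t_def L_def
    by (simp add: algebra_simps)
qed

lemma core_h:
  fixes e a b :: real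
  assumes "0 \<le> e" "0 \<le> a" "a \<le> 1" "0 \<le> b" "b \<le> 1"
  shows "a * b + e * (1 - a) * (1 - b) - max 0 (a - e) \<le> e"
proof (cases "a \<le> e")
  case True
  have "a * b \<le> e * b" using True assms by (simp add: mult_right_mono)
  moreover have "e * (1 - b) * (1 - a) \<le> e * (1 - b)" using assms
    by (intro mult_left_le) auto
  then have "e * (1 - a) * (1 - b) \<le> e * (1 - b)" by (simp add: ac_simps)
  ultimately show ?thesis using True by (simp add: algebra_simps)
next
  case False
  have "0 \<le> a * e" using assms by simp
  then have "0 \<le> a - e * (1 - a)" using False by (simp add: algebra_simps)
  then have "0 \<le> (1 - b) * (a - e * (1 - a))" using assms by simp
  then show ?thesis using False by (simp add: algebra_simps)
qed

lemma core_ab1: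
  fixes e a b :: real
  assumes "0 \<le> e" "e \<le> 1" "0 \<le> a" "a \<le> 1" "0 \<le> b" "b \<le> 1"
  shows "a * b + e * (1 - a) * (1 - b) \<le> 1"
proof -
  have "e * ((1 - a) * (1 - b)) \<le> (1 - a) * (1 - b)" using assms by (intro mult_left_le_one_le) auto
  moreover have "a * b \<le> a" using assms mult_right_le_one_le[of a b] by auto
  moreover have "a * b \<le> b" using assms mult_left_le_one_le[of b a] by auto
  ultimately show ?thesis by (simp add: algebra_simps)
qed

lemma core:
  fixes e a a' b b' c c' d d' :: real
  assumes e: "0 \<le> e" "e < 1"
    and r: "0 \<le> a" "a \<le> 1" "0 \<le> a'" "a' \<le> 1" "0 \<le> b" "b \<le> 1" "0 \<le> b'" "b' \<le> 1"
      "0 \<le> c" "c \<le> 1" "0 \<le> c'" "c' \<le> 1" "0 \<le> d" "d \<le> 1" "0 \<le> d'" "d' \<le> 1"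
    and n: "\<bar>a - a'\<bar> \<le> e" "\<bar>b - b'\<bar> \<le> e" "\<bar>c - c'\<bar> \<le> e" "\<bar>d - d'\<bar> \<le> e"
  shows "(1 - e) * a * b + e * (1 - e) * (1 - a) * (1 - b) - a' * (1 - d) - (1 - c) * b' - c' * d'
         \<le> e * (1 - e)"
proof -
  define m where "m = min (max 0 (a - e)) (min (max 0 (b - e)) (1 - e))"
  have m0: "0 \<le> m" "m \<le> 1 - e" using e by (auto simp: m_def)
  have ma: "m \<le> a'" using r n unfolding m_def by linarith
  have mb: "m \<le> b'" using r n unfolding m_def by linarith
  have "m * (1 - d) \<le> a' * (1 - d)" using r ma by (intro mult_right_mono) auto
  moreover have "m * (1 - c) \<le> (1 - c) * b'" using r mb by (subst mult.commute, intro mult_right_mono) auto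
  moreover have "max 0 (c - e) * max 0 (d - e) \<le> c' * d'" using r n by (intro mult_mono) auto
  moreover have "m * (1 - e) \<le> m * (1 - d) + m * (1 - c) + max 0 (c - e) * max 0 (d - e)"
    using core_g[of m e c d] m0 e r by auto
  ultimately have S: "m * (1 - e) \<le> a' * (1 - d) + (1 - c) * b' + c' * d'" by linarith
  have H: "a * b + e * (1 - a) * (1 - b) - m \<le> e"
  proof -
    have "m = max 0 (a - e) \<or> m = max 0 (b - e) \<or> m = 1 - e" unfolding m_def by linarith
    moreover have "a * b + e * (1 - a) * (1 - b) - max 0 (a - e) \<le> e" using core_h[of e a b] e r by auto
    moreover have "b * a + e * (1 - b) * (1 - a) - max 0 (b - e) \<le> e" using core_h[of e b a] e r by auto
    moreover have "a * b + e * (1 - a) * (1 - b) \<le> 1" using core_ab1[of e a b] e r by auto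
    ultimately show ?thesis by (auto simp: ac_simps)
  qed
  have "(1 - e) * (a * b + e * (1 - a) * (1 - b) - m) \<le> (1 - e) * e"
    using H e by (intro mult_left_mono) auto
  then show ?thesis using S by (simp add: algebra_simps)
qed



lemma two_cases: fixes x :: 2 shows "x = 0 \<or> x = 1"
proof (induct x)
  case (of_int z)
  then have "z = 0 \<or> z = 1" by fastforce
  then show ?case by auto
qed

lemma two_neq: "(0::2) \<noteq> 1" by simp

lemma UNIV2: "(UNIV :: 2 set) = {0, 1}"
  using two_cases by auto

lemma sum2: "(\<Sum>a\<in>(UNIV::2 set). f a) = f 0 + f 1"
  by (simp add: UNIV2)

lemma local_facts:
  fixes q :: "2 \<Rightarrow> real"
  assumes "\<forall>a. q a \<ge> 0" "(\<Sum>a\<in>UNIV. q a) = 1"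
  shows "0 \<le> q 0" "q 0 \<le> 1" "q 1 = 1 - q 0"
  using assms by (auto simp: sum2) (smt (verit) assms(1))+

lemma close_fact:
  fixes q r :: "2 \<Rightarrow> real"
  assumes "(1/2) * (\<Sum>a\<in>UNIV. \<bar>q a - r a\<bar>) \<le> e" "q 1 = 1 - q 0" "r 1 = 1 - r 0"
  shows "\<bar>q 0 - r 0\<bar> \<le> e"
  using assms by (simp add: sum2)

lemma validity:
  assumes e: "0 \<le> \<epsilon>" "\<epsilon> < 1" and p: "p \<in> PAB \<epsilon>"
  shows "ineq_lhs \<epsilon> p \<le> \<epsilon> * (1 - \<epsilon>)"
proof -
  from p obtain M :: "real measure" and pA pB :: "2 \<Rightarrow> 2 \<Rightarrow> real \<Rightarrow> 2 \<Rightarrow> real" where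
    ps: "prob_space M" and
    mA: "\<forall>x y a. (\<lambda>l. pA x y l a) \<in> borel_measurable M" and
    mB: "\<forall>x y b. (\<lambda>l. pB x y l b) \<in> borel_measurable M" and
    nA: "\<forall>x y. \<forall>l\<in>space M. (\<forall>a. pA x y l a \<ge> 0) \<and> (\<Sum>a\<in>UNIV. pA x y l a) = 1" and
    nB: "\<forall>x y. \<forall>l\<in>space M. (\<forall>b. pB x y l b \<ge> 0) \<and> (\<Sum>b\<in>UNIV. pB x y l b) = 1" and
    pr: "\<forall>a b x y. pr p a b x y = (\<integral>l. pA x y l a * pB x y l b \<partial>M)" and
    cA: "\<forall>x y y'. \<forall>l\<in>space M. (1/2) * (\<Sum>a\<in>UNIV. \<bar>pA x y l a - pA x y' l a\<bar>) \<le> \<epsilon>" and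
    cB: "\<forall>y x x'. \<forall>l\<in>space M. (1/2) * (\<Sum>b\<in>UNIV. \<bar>pB x y l b - pB x' y l b\<bar>) \<le> \<epsilon>"
    unfolding PAB_def mem_Collect_eq by (elim exE conjE) (rule that; assumption)
  interpret prob_space M by (rule ps)
  have Af: "0 \<le> pA x y l 0" "pA x y l 0 \<le> 1" "pA x y l 1 = 1 - pA x y l 0" if "l \<in> space M" for x y l
    using local_facts[of "pA x y l"] nA that by auto
  have Bf: "0 \<le> pB x y l 0" "pB x y l 0 \<le> 1" "pB x y l 1 = 1 - pB x y l 0" if "l \<in> space M" for x y l
    using local_facts[of "pB x y l"] nB that by auto
  have Ac: "\<bar>pA x y l 0 - pA x y' l 0\<bar> \<le> \<epsilon>" if "l \<in> space M" for x y y' l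
    using close_fact[of "pA x y l" "pA x y' l"] cA Af that by auto
  have Bc: "\<bar>pB x y l 0 - pB x' y l 0\<bar> \<le> \<epsilon>" if "l \<in> space M" for x x' y l
    using close_fact[of "pB x y l" "pB x' y l"] cB Bf that by auto
  have Ab: "\<bar>pA x y l a\<bar> \<le> 1" if "l \<in> space M" for x y l a
    using Af[OF that, of x y] two_cases[of a] by auto
  have Bb: "\<bar>pB x y l a\<bar> \<le> 1" if "l \<in> space M" for x y l a
    using Bf[OF that, of x y] two_cases[of a] by auto
  have int: "integrable M (\<lambda>l. pA x y l a * pB x y l b)" for x y a b
  proof (rule integrable_const_bound[where B=1])
    show "AE l in M. norm (pA x y l a * pB x y l b) \<le> 1"
      using Ab Bb by (auto simp: abs_mult intro!: mult_le_one)
    show "(\<lambda>l. pA x y l a * pB x y l b) \<in> borel_measurable M"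
      using mA mB by (intro borel_measurable_times) auto
  qed
  define G where "G l = (1 - \<epsilon>) * (pA 0 0 l 0 * pB 0 0 l 0) + \<epsilon> * (1 - \<epsilon>) * (pA 0 0 l 1 * pB 0 0 l 1)
     - pA 0 1 l 0 * pB 0 1 l 1 - pA 1 0 l 1 * pB 1 0 l 0 - pA 1 1 l 0 * pB 1 1 l 0" for l
  have "ineq_lhs \<epsilon> p = (\<integral>l. G l \<partial>M)"
    unfolding ineq_lhs_def G_def using int by (simp add: pr)
  also have "\<dots> \<le> (\<integral>l. \<epsilon> * (1 - \<epsilon>) \<partial>M)"
  proof (rule integral_mono)
    show "integrable M G" unfolding G_def using int by simp
    show "integrable M (\<lambda>l. \<epsilon> * (1 - \<epsilon>))" by simp
    fix l assume l: "l \<in> space M"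
    show "G l \<le> \<epsilon> * (1 - \<epsilon>)"
      unfolding G_def Af(3)[OF l] Bf(3)[OF l]
      using core[OF e Af(1,2)[OF l, of 0 0] Af(1,2)[OF l, of 0 1] Bf(1,2)[OF l, of 0 0] Bf(1,2)[OF l, of 1 0]
          Af(1,2)[OF l, of 1 0] Af(1,2)[OF l, of 1 1] Bf(1,2)[OF l, of 0 1] Bf(1,2)[OF l, of 1 1]
          Ac[OF l, of 0 0 1] Bc[OF l, of 0 0 1] Ac[OF l, of 1 0 1] Bc[OF l, of 0 1 1]]
      by (simp add: algebra_simps)
  qed
  also have "\<dots> = \<epsilon> * (1 - \<epsilon>)" by (simp add: prob_space)
  finally show ?thesis .
qed



lemma PAB_model:
  assumes p: "p \<in> PAB \<epsilon>"
  shows "\<exists>(M::real measure) (pA :: 2 \<Rightarrow> 2 \<Rightarrow> real \<Rightarrow> 2 \<Rightarrow> real) (pB :: 2 \<Rightarrow> 2 \<Rightarrow> real \<Rightarrow> 2 \<Rightarrow> real).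
     prob_space M \<and>
     (\<forall>x y a. pr p a 0 x y + pr p a 1 x y = (\<integral>l. pA x y l a \<partial>M)) \<and>
     (\<forall>x y b. pr p 0 b x y + pr p 1 b x y = (\<integral>l. pB x y l b \<partial>M)) \<and>
     (\<forall>x y. (\<integral>l. pA x y l 0 \<partial>M) + (\<integral>l. pA x y l 1 \<partial>M) = 1) \<and>
     (\<forall>x y y' a. \<forall>l\<in>space M. \<bar>pA x y l a - pA x y' l a\<bar> \<le> \<epsilon>) \<and>
     (\<forall>x x' y b. \<forall>l\<in>space M. \<bar>pB x y l b - pB x' y l b\<bar> \<le> \<epsilon>)"
proof -
  from p obtain M :: "real measure" and pA pB :: "2 \<Rightarrow> 2 \<Rightarrow> real \<Rightarrow> 2 \<Rightarrow> real" where
    ps: "prob_space M" and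
    mA: "\<forall>x y a. (\<lambda>l. pA x y l a) \<in> borel_measurable M" and
    mB: "\<forall>x y b. (\<lambda>l. pB x y l b) \<in> borel_measurable M" and
    nA: "\<forall>x y. \<forall>l\<in>space M. (\<forall>a. pA x y l a \<ge> 0) \<and> (\<Sum>a\<in>UNIV. pA x y l a) = 1" and
    nB: "\<forall>x y. \<forall>l\<in>space M. (\<forall>b. pB x y l b \<ge> 0) \<and> (\<Sum>b\<in>UNIV. pB x y l b) = 1" and
    pr: "\<forall>a b x y. pr p a b x y = (\<integral>l. pA x y l a * pB x y l b \<partial>M)" and
    cA: "\<forall>x y y'. \<forall>l\<in>space M. (1/2) * (\<Sum>a\<in>UNIV. \<bar>pA x y l a - pA x y' l a\<bar>) \<le> \<epsilon>" and
    cB: "\<forall>y x x'. \<forall>l\<in>space M. (1/2) * (\<Sum>b\<in>UNIV. \<bar>pB x y l b - pB x' y l b\<bar>) \<le> \<epsilon>"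
    unfolding PAB_def mem_Collect_eq by (elim exE conjE) (rule that; assumption)
  interpret prob_space M by (rule ps)
  have Af: "0 \<le> pA x y l 0" "pA x y l 0 \<le> 1" "pA x y l 1 = 1 - pA x y l 0" if "l \<in> space M" for x y l
    using local_facts[of "pA x y l"] nA that by auto
  have Bf: "0 \<le> pB x y l 0" "pB x y l 0 \<le> 1" "pB x y l 1 = 1 - pB x y l 0" if "l \<in> space M" for x y l
    using local_facts[of "pB x y l"] nB that by auto
  have Ac: "\<bar>pA x y l a - pA x y' l a\<bar> \<le> \<epsilon>" if "l \<in> space M" for x y y' l a
    using close_fact[of "pA x y l" "pA x y' l"] cA Af[OF that] two_cases[of a] that by (auto simp: abs_minus_commute)
  have Bc: "\<bar>pB x y l b - pB x' y l b\<bar> \<le> \<epsilon>" if "l \<in> space M" for x x' y l b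
    using close_fact[of "pB x y l" "pB x' y l"] cB Bf[OF that] two_cases[of b] that by (auto simp: abs_minus_commute)
  have Ab: "\<bar>pA x y l a\<bar> \<le> 1" if "l \<in> space M" for x y l a
    using Af[OF that, of x y] two_cases[of a] by auto
  have Bb: "\<bar>pB x y l a\<bar> \<le> 1" if "l \<in> space M" for x y l a
    using Bf[OF that, of x y] two_cases[of a] by auto
  have intA: "integrable M (\<lambda>l. pA x y l a)" for x y a
    by (rule integrable_const_bound[where B=1]) (use Ab mA in auto)
  have intB: "integrable M (\<lambda>l. pB x y l a)" for x y a
    by (rule integrable_const_bound[where B=1]) (use Bb mB in auto)
  have int: "integrable M (\<lambda>l. pA x y l a * pB x y l b)" for x y a b
  proof (rule integrable_const_bound[where B=1])
    show "AE l in M. norm (pA x y l a * pB x y l b) \<le> 1"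
      using Ab Bb by (auto simp: abs_mult intro!: mult_le_one)
    show "(\<lambda>l. pA x y l a * pB x y l b) \<in> borel_measurable M"
      using mA mB by (intro borel_measurable_times) auto
  qed
  have mgA: "pr p a 0 x y + pr p a 1 x y = (\<integral>l. pA x y l a \<partial>M)" for x y a
  proof -
    have "pr p a 0 x y + pr p a 1 x y = (\<integral>l. pA x y l a * pB x y l 0 + pA x y l a * pB x y l 1 \<partial>M)"
      using int by (simp add: pr)
    also have "\<dots> = (\<integral>l. pA x y l a \<partial>M)"
      by (rule Bochner_Integration.integral_cong[OF refl]) (auto simp: Bf distrib_left[symmetric])
    finally show ?thesis .
  qed
  have mgB: "pr p 0 b x y + pr p 1 b x y = (\<integral>l. pB x y l b \<partial>M)" for x y b
  proof -
    have "pr p 0 b x y + pr p 1 b x y = (\<integral>l. pA x y l 0 * pB x y l b + pA x y l 1 * pB x y l b \<partial>M)"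
      using int by (simp add: pr)
    also have "\<dots> = (\<integral>l. pB x y l b \<partial>M)"
      by (rule Bochner_Integration.integral_cong[OF refl]) (auto simp: Af distrib_right[symmetric])
    finally show ?thesis .
  qed
  have nm: "(\<integral>l. pA x y l 0 \<partial>M) + (\<integral>l. pA x y l 1 \<partial>M) = 1" for x y
  proof -
    have "(\<integral>l. pA x y l 0 \<partial>M) + (\<integral>l. pA x y l 1 \<partial>M) = (\<integral>l. pA x y l 0 + pA x y l 1 \<partial>M)"
      using intA by simp
    also have "\<dots> = (\<integral>l. 1 \<partial>M)" by (rule Bochner_Integration.integral_cong[OF refl]) (auto simp: Af)
    also have "\<dots> = 1" by (simp add: prob_space)
    finally show ?thesis .
  qed
  show ?thesis
    by (rule exI[of _ M], rule exI[of _ pA], rule exI[of _ pB]) (use ps mgA mgB nm Ac Bc in auto)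
qed

lemma PAB_norm:
  assumes "p \<in> PAB \<epsilon>"
  shows "pr p 0 0 x y + pr p 0 1 x y + pr p 1 0 x y + pr p 1 1 x y = 1"
proof -
  from PAB_model[OF assms] obtain M :: "real measure" and pA pB :: "2 \<Rightarrow> 2 \<Rightarrow> real \<Rightarrow> 2 \<Rightarrow> real" where
    h: "\<forall>x y a. pr p a 0 x y + pr p a 1 x y = (\<integral>l. pA x y l a \<partial>M)"
    "\<forall>x y. (\<integral>l. pA x y l 0 \<partial>M) + (\<integral>l. pA x y l 1 \<partial>M) = 1"
    by (elim exE conjE) (rule that; assumption)
  have "pr p 0 0 x y + pr p 0 1 x y = (\<integral>l. pA x y l 0 \<partial>M)" using h(1) by blast
  moreover have "pr p 1 0 x y + pr p 1 1 x y = (\<integral>l. pA x y l 1 \<partial>M)" using h(1) by blast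
  moreover have "(\<integral>l. pA x y l 0 \<partial>M) + (\<integral>l. pA x y l 1 \<partial>M) = 1" using h(2) by blast
  ultimately show ?thesis by linarith
qed

lemma PAB0_NS:
  assumes "p \<in> PAB 0"
  shows "pr p a 0 x y + pr p a 1 x y = pr p a 0 x y' + pr p a 1 x y'"
    "pr p 0 b x y + pr p 1 b x y = pr p 0 b x' y + pr p 1 b x' y"
proof -
  from PAB_model[OF assms] obtain M :: "real measure" and pA pB :: "2 \<Rightarrow> 2 \<Rightarrow> real \<Rightarrow> 2 \<Rightarrow> real" where
    h: "\<forall>x y a. pr p a 0 x y + pr p a 1 x y = (\<integral>l. pA x y l a \<partial>M)"
    "\<forall>x y b. pr p 0 b x y + pr p 1 b x y = (\<integral>l. pB x y l b \<partial>M)"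
    "\<forall>x y y' a. \<forall>l\<in>space M. \<bar>pA x y l a - pA x y' l a\<bar> \<le> 0"
    "\<forall>x x' y b. \<forall>l\<in>space M. \<bar>pB x y l b - pB x' y l b\<bar> \<le> 0"
    by (elim exE conjE) (rule that; assumption)
  have "(\<integral>l. pA x y l a \<partial>M) = (\<integral>l. pA x y' l a \<partial>M)"
    by (rule Bochner_Integration.integral_cong[OF refl]) (use h(3) in auto)
  then show "pr p a 0 x y + pr p a 1 x y = pr p a 0 x y' + pr p a 1 x y'" using h(1) by simp
  have "(\<integral>l. pB x y l b \<partial>M) = (\<integral>l. pB x' y l b \<partial>M)"
    by (rule Bochner_Integration.integral_cong[OF refl]) (use h(4) in auto)
  then show "pr p 0 b x y + pr p 1 b x y = pr p 0 b x' y + pr p 1 b x' y" using h(2) by simp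
qed



lemma all2: "(\<forall>x::2. P x) \<longleftrightarrow> P 0 \<and> P 1"
  using two_cases by metis

lemma ex2: "(\<exists>x::2. P x) \<longleftrightarrow> P 0 \<or> P 1"
  using two_cases by metis

definition mk2 :: "real \<Rightarrow> real \<Rightarrow> real \<Rightarrow> real \<Rightarrow> 2 \<Rightarrow> 2 \<Rightarrow> real" where
  "mk2 u00 u01 u10 u11 x y = (if x = 0 then (if y = 0 then u00 else u01) else (if y = 0 then u10 else u11))"

definition bt :: "real \<Rightarrow> 2 \<Rightarrow> real" where
  "bt u a = (if a = 0 then u else 1 - u)"

definition prodpt :: "(2 \<Rightarrow> 2 \<Rightarrow> real) \<Rightarrow> (2 \<Rightarrow> 2 \<Rightarrow> real) \<Rightarrow> behaviour" where
  "prodpt al be = (\<chi> a b x y. bt (al x y) a * bt (be x y) b)"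

lemma prodpt_pr: "pr (prodpt al be) a b x y = bt (al x y) a * bt (be x y) b"
  by (simp add: pr_def prodpt_def)

lemma prodpt_comp: "prodpt al be $ a $ b $ x $ y = bt (al x y) a * bt (be x y) b"
  by (simp add: prodpt_def)

lemma prodpt_in:
  assumes "\<And>x y. 0 \<le> al x y \<and> al x y \<le> 1" "\<And>x y. 0 \<le> be x y \<and> be x y \<le> 1"
    "\<And>x y y'. \<bar>al x y - al x y'\<bar> \<le> \<epsilon>" "\<And>x x' y. \<bar>be x y - be x' y\<bar> \<le> \<epsilon>"
  shows "prodpt al be \<in> PAB \<epsilon>"
proof -
  let ?M = "return borel (0::real)"
  interpret prob_space ?M by (rule prob_space_return) simp
  have pu: "prob UNIV = 1" using prob_space by simp
  have ic: "(\<integral>l. c \<partial>?M) = c" for c :: real by (simp add: pu)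
  show ?thesis unfolding PAB_def mem_Collect_eq
    apply (rule exI[of _ ?M])
    apply (rule exI[of _ "\<lambda>x y l a. bt (al x y) a"])
    apply (rule exI[of _ "\<lambda>x y l b. bt (be x y) b"])
    using assms by (auto simp: prob_space_axioms ic pu prodpt_pr sum2 bt_def abs_minus_commute)
qed

definition vtx :: "real \<Rightarrow> nat \<Rightarrow> real \<times> real" where
  "vtx e i = (if i = 0 then (0,0) else if i = 1 then (1,1) else if i = 2 then (0,e)
     else if i = 3 then (e,0) else if i = 4 then (1,1-e) else (1-e,1))"

definition pt :: "real \<Rightarrow> nat \<times> nat \<times> nat \<times> nat \<Rightarrow> behaviour" where
  "pt e t = (case t of (i0,i1,j0,j1) \<Rightarrow>
     prodpt (mk2 (fst (vtx e i0)) (snd (vtx e i0)) (fst (vtx e i1)) (snd (vtx e i1)))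
            (mk2 (fst (vtx e j0)) (fst (vtx e j1)) (snd (vtx e j0)) (snd (vtx e j1))))"

lemma vtx_ok: assumes "0 \<le> e" "e < 1"
  shows "0 \<le> fst (vtx e i)" "fst (vtx e i) \<le> 1" "0 \<le> snd (vtx e i)" "snd (vtx e i) \<le> 1"
    "\<bar>fst (vtx e i) - snd (vtx e i)\<bar> \<le> e"
  using assms by (auto simp: vtx_def)

lemma pt_in: assumes "0 \<le> e" "e < 1" shows "pt e t \<in> PAB e"
proof -
  obtain i0 i1 j0 j1 where t: "t = (i0,i1,j0,j1)" by (cases t) auto
  note V = vtx_ok[OF assms]
  show ?thesis unfolding t pt_def prod.case
    apply (rule prodpt_in)
    subgoal for x y using V[of i0] V[of i1] by (auto simp: mk2_def)
    subgoal for x y using V[of j0] V[of j1] by (auto simp: mk2_def)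
    subgoal for x y y' using V[of i0] V[of i1] two_cases[of y] two_cases[of y'] by (auto simp: mk2_def abs_minus_commute)
    subgoal for x x' y using V[of j0] V[of j1] two_cases[of x] two_cases[of x'] by (auto simp: mk2_def abs_minus_commute)
    done
qed

lemma pt_comp: "pt e (i0,i1,j0,j1) $ a $ b $ x $ y =
   bt (mk2 (fst (vtx e i0)) (snd (vtx e i0)) (fst (vtx e i1)) (snd (vtx e i1)) x y) a *
   bt (mk2 (fst (vtx e j0)) (fst (vtx e j1)) (snd (vtx e j0)) (snd (vtx e j1)) x y) b"
  by (simp add: pt_def prodpt_comp)

lemma pt_lhs: "ineq_lhs e (pt e (i0,i1,j0,j1)) =
  (1 - e) * (fst (vtx e i0) * fst (vtx e j0)) + e * (1 - e) * ((1 - fst (vtx e i0)) * (1 - fst (vtx e j0)))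
  - snd (vtx e i0) * (1 - fst (vtx e j1)) - (1 - fst (vtx e i1)) * snd (vtx e j0)
  - snd (vtx e i1) * snd (vtx e j1)"
  by (simp add: ineq_lhs_def pr_def pt_comp mk2_def bt_def)

lemma test: "ineq_lhs e (pt e (1,4,1,4)) = e * (1 - e)"
  by (simp add: pt_lhs vtx_def algebra_simps)



lemma tri_indep:
  fixes D :: "nat \<Rightarrow> 'v::real_vector" and g :: "nat \<Rightarrow> 'v \<Rightarrow> real"
  assumes lin: "\<And>j. j < n \<Longrightarrow> linear (g j)"
    and z: "\<And>i j. i < j \<Longrightarrow> j < n \<Longrightarrow> g j (D i) = 0"
    and nz: "\<And>i. i < n \<Longrightarrow> g i (D i) \<noteq> 0"
  shows "inj_on D {..<n}" "independent (D ` {..<n})"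
proof -
  show inj: "inj_on D {..<n}"
  proof (rule inj_onI)
    fix i j assume ij: "i \<in> {..<n}" "j \<in> {..<n}" "D i = D j"
    show "i = j"
    proof (rule ccontr)
      assume "i \<noteq> j"
      then consider "i < j" | "j < i" by linarith
      then show False
      proof cases
        case 1 then show False using z[of i j] nz[of j] ij by auto
      next
        case 2 then show False using z[of j i] nz[of i] ij by auto
      qed
    qed
  qed
  show "independent (D ` {..<n})"
  proof (rule independent_if_scalars_zero)
    show "finite (D ` {..<n})" by simp
    fix f v assume s: "(\<Sum>x\<in>D ` {..<n}. f x *\<^sub>R x) = 0" and v: "v \<in> D ` {..<n}"
    define c where "c i = f (D i)" for i
    have s2: "(\<Sum>i<n. c i *\<^sub>R D i) = 0"
      using s by (simp add: sum.reindex[OF inj] c_def)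
    have "c j = 0" if "j < n" for j
      using that
    proof (induction "n - j" arbitrary: j rule: less_induct)
      case less
      have "g j (\<Sum>i<n. c i *\<^sub>R D i) = 0" using s2 lin[OF less.prems] linear_0 by simp
      then have "(\<Sum>i<n. c i * g j (D i)) = 0"
        using lin[OF less.prems] by (simp add: linear_sum linear_scale)
      moreover have "(\<Sum>i<n. c i * g j (D i)) = c j * g j (D j)"
      proof -
        have "\<forall>i\<in>{..<n} - {j}. c i * g j (D i) = 0"
        proof
          fix i assume i: "i \<in> {..<n} - {j}"
          show "c i * g j (D i) = 0"
          proof (cases "i < j")
            case True then show ?thesis using z[of i j] less.prems by simp
          next
            case False
            then have "j < i" using i by auto
            then have "c i = 0" using less.hyps[of i] i by auto
            then show ?thesis by simp
          qed
        qed
        then have "(\<Sum>i\<in>{..<n} - {j}. c i * g j (D i)) = 0" by (rule sum.neutral)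
        moreover have "(\<Sum>i<n. c i * g j (D i)) = c j * g j (D j) + (\<Sum>i\<in>{..<n} - {j}. c i * g j (D i))"
          using less.prems by (intro sum.remove) auto
        ultimately show ?thesis by simp
      qed
      ultimately show ?case using nz[OF less.prems] by simp
    qed
    then show "f v = 0" using v by (auto simp: c_def)
  qed
qed

lemma aff_dim_ge:
  fixes S :: "'v::euclidean_space set" and g :: "nat \<Rightarrow> 'v \<Rightarrow> real"
  assumes Pz: "Pz \<in> S" and P: "\<And>i. i < n \<Longrightarrow> P i \<in> S"
    and lin: "\<And>j. j < n \<Longrightarrow> linear (g j)"
    and z: "\<And>i j. i < j \<Longrightarrow> j < n \<Longrightarrow> g j (P i - Pz) = 0"
    and nz: "\<And>i. i < n \<Longrightarrow> g i (P i - Pz) \<noteq> 0"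
  shows "int n \<le> aff_dim S"
proof -
  define D where "D i = P i - Pz" for i
  have t: "inj_on D {..<n}" "independent (D ` {..<n})"
    using tri_indep[of n g D] lin z nz unfolding D_def by auto
  have sub: "D ` {..<n} \<subseteq> (\<lambda>x. x - Pz) ` S" using P by (auto simp: D_def)
  have "aff_dim S = int (dim ((\<lambda>x. x - Pz) ` S))"
    by (rule aff_dim_eq_dim_subtract) (simp add: Pz hull_inc)
  moreover have "card (D ` {..<n}) \<le> dim ((\<lambda>x. x - Pz) ` S)"
    by (rule independent_card_le_dim[OF sub t(2)])
  moreover have "card (D ` {..<n}) = n" using t(1) by (simp add: card_image)
  ultimately show ?thesis by simp
qed

lemma aff_dim_le:
  fixes S :: "'v::euclidean_space set"
  assumes Pz: "Pz \<in> S" and sp: "\<And>p. p \<in> S \<Longrightarrow> p - Pz \<in> span (set W)"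
  shows "aff_dim S \<le> int (length W)"
proof -
  have "aff_dim S = int (dim ((\<lambda>x. x - Pz) ` S))"
    by (rule aff_dim_eq_dim_subtract) (simp add: Pz hull_inc)
  moreover have "dim ((\<lambda>x. x - Pz) ` S) \<le> card (set W)"
    by (rule dim_le_card) (use sp in auto)
  moreover have "card (set W) \<le> length W" by (rule card_length)
  ultimately show ?thesis by simp
qed

lemma coord_linear: "linear (\<lambda>v::behaviour. v $ a $ b $ x $ y)"
  by (rule linearI) auto



definition crd :: "2 \<times> 2 \<times> 2 \<times> 2 \<Rightarrow> behaviour \<Rightarrow> real" where
  "crd k v = (case k of (a,b,x,y) \<Rightarrow> v $ a $ b $ x $ y)"

lemma crd_eq: "crd (a,b,x,y) = (\<lambda>v. v $ a $ b $ x $ y)"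
  by (rule ext) (simp add: crd_def)

lemma crd_linear: "linear (crd k)"
  by (cases k) (simp add: crd_eq coord_linear)

lemma lt11: "(i::nat) < 11 \<Longrightarrow> i = 0 \<or> i = 1 \<or> i = 2 \<or> i = 3 \<or> i = 4 \<or> i = 5 \<or> i = 6 \<or> i = 7 \<or> i = 8 \<or> i = 9 \<or> i = 10"
  by arith

definition labsP :: "(nat \<times> nat \<times> nat \<times> nat) list" where
  "labsP = [(0,0,0,2), (0,0,0,1), (0,2,0,0), (0,1,0,0), (0,1,2,0), (2,0,0,1), (1,0,3,1), (1,3,4,1), (1,4,1,4), (3,1,1,0), (4,1,1,3)]"

definition ksP :: "(2 \<times> 2 \<times> 2 \<times> 2) list" where
  "ksP = [(1,1,1,1), (1,1,0,1), (0,1,1,1), (1,1,1,0), (0,0,1,0), (0,0,0,1), (1,1,0,0), (1,0,1,0), (0,0,1,1), (1,0,0,0), (0,1,0,1)]"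

lemma face_ge11:
  assumes e: "0 < e" "e < 1"
  shows "11 \<le> aff_dim {p \<in> PAB e. ineq_lhs e p = e * (1 - e)}"
proof -
  have e1: "e \<noteq> 0" "e \<noteq> 1" "1 - e \<noteq> 0" using e by auto
  have "int 11 \<le> aff_dim {p \<in> PAB e. ineq_lhs e p = e * (1 - e)}"
  proof (rule aff_dim_ge[where Pz = "pt e (0,0,0,0)" and P = "\<lambda>i. pt e (labsP ! i)" and g = "\<lambda>j. crd (ksP ! j)"])
    show "pt e (0,0,0,0) \<in> {p \<in> PAB e. ineq_lhs e p = e * (1 - e)}"
      using pt_in[of e] e by (simp add: pt_lhs vtx_def)
    show "pt e (labsP ! i) \<in> {p \<in> PAB e. ineq_lhs e p = e * (1 - e)}" if "i < 11" for i
      using pt_in[of e] e lt11[OF that] by (auto simp: labsP_def pt_lhs vtx_def algebra_simps)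
    show "linear (crd (ksP ! j))" for j by (rule crd_linear)
    show "crd (ksP ! j) (pt e (labsP ! i) - pt e (0,0,0,0)) = 0" if "i < j" "j < 11" for i j
      using lt11[OF that(2)] lt11[of i] that
      by (auto simp: labsP_def ksP_def crd_def pt_comp mk2_def bt_def vtx_def)
    show "crd (ksP ! i) (pt e (labsP ! i) - pt e (0,0,0,0)) \<noteq> 0" if "i < 11" for i
      using lt11[OF that] e1 by (auto simp: labsP_def ksP_def crd_def pt_comp mk2_def bt_def vtx_def)
  qed
  then show ?thesis by simp
qed



lemma vec4_eq: "(v::behaviour) = w \<longleftrightarrow> (\<forall>a b x y. v $ a $ b $ x $ y = w $ a $ b $ x $ y)"
  by (auto simp: vec_eq_iff)

definition ev :: "2 \<times> 2 \<times> 2 \<times> 2 \<Rightarrow> behaviour" where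
  "ev k = (\<chi> a b x y. if (a,b,x,y) = k then 1 else 0)"

lemma ev_comp: "ev k $ a $ b $ x $ y = (if (a,b,x,y) = k then 1 else 0)"
  by (simp add: ev_def)

lemma span_sum_list:
  assumes "\<And>k. k \<in> set L \<Longrightarrow> f k \<in> span S"
  shows "sum_list (map f L) \<in> span S"
  using assms by (induction L) (auto intro: span_add span_zero)

definition w12 :: "2 \<times> 2 \<times> 2 \<times> 2 \<Rightarrow> behaviour" where
  "w12 k = (case k of (a,b,x,y) \<Rightarrow> ev (a,b,x,y) - ev (1,1,x,y))"

definition L12 :: "(2 \<times> 2 \<times> 2 \<times> 2) list" where
  "L12 = [(0,0,0,0),(0,1,0,0),(1,0,0,0),(0,0,0,1),(0,1,0,1),(1,0,0,1),
          (0,0,1,0),(0,1,1,0),(1,0,1,0),(0,0,1,1),(0,1,1,1),(1,0,1,1)]"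

lemma span12:
  assumes p: "p \<in> PAB \<epsilon>" and q: "q \<in> PAB \<epsilon>"
  shows "p - q \<in> span (set (map w12 L12))"
proof -
  define v where "v = p - q"
  have nv: "v $ 1 $ 1 $ x $ y = - (v $ 0 $ 0 $ x $ y + v $ 0 $ 1 $ x $ y + v $ 1 $ 0 $ x $ y)" for x y
    using PAB_norm[OF p, of x y] PAB_norm[OF q, of x y] by (simp add: v_def pr_def)
  have eq: "v = sum_list (map (\<lambda>k. crd k v *\<^sub>R w12 k) L12)"
    unfolding vec4_eq all2
    by (simp add: L12_def crd_def w12_def ev_comp nv)
  have "sum_list (map (\<lambda>k. crd k v *\<^sub>R w12 k) L12) \<in> span (set (map w12 L12))"
    by (rule span_sum_list, rule span_scale, rule span_base) auto
  then show ?thesis using eq v_def by simp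
qed

definition c01 :: "(2 \<times> 2 \<times> 2 \<times> 2 \<Rightarrow> real) \<Rightarrow> 2 \<Rightarrow> 2 \<Rightarrow> real" where
  "c01 f x y = (if y = 0 then f (0,1,x,0) else f (0,0,x,0) + f (0,1,x,0) - f (0,0,x,1))"

definition c10 :: "(2 \<times> 2 \<times> 2 \<times> 2 \<Rightarrow> real) \<Rightarrow> 2 \<Rightarrow> 2 \<Rightarrow> real" where
  "c10 f x y = (if x = 0 then f (1,0,0,y) else f (0,0,0,y) + f (1,0,0,y) - f (0,0,1,y))"

definition cmpl :: "(2 \<times> 2 \<times> 2 \<times> 2 \<Rightarrow> real) \<Rightarrow> behaviour" where
  "cmpl f = (\<chi> a b x y. if a = 0 \<and> b = 0 then f (0,0,x,y)
      else if a = 0 then c01 f x y else if b = 0 then c10 f x y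
      else - (f (0,0,x,y) + c01 f x y + c10 f x y))"

definition w8 :: "2 \<times> 2 \<times> 2 \<times> 2 \<Rightarrow> behaviour" where
  "w8 k = cmpl (\<lambda>k'. if k' = k then 1 else 0)"

definition L8 :: "(2 \<times> 2 \<times> 2 \<times> 2) list" where
  "L8 = [(0,0,0,0),(0,0,0,1),(0,0,1,0),(0,0,1,1),(0,1,0,0),(0,1,1,0),(1,0,0,0),(1,0,0,1)]"

lemma span8:
  assumes p: "p \<in> PAB 0" and q: "q \<in> PAB 0"
  shows "p - q \<in> span (set (map w8 L8))"
proof -
  define v where "v = p - q"
  have nv: "v $ 1 $ 1 $ x $ y = - (v $ 0 $ 0 $ x $ y + v $ 0 $ 1 $ x $ y + v $ 1 $ 0 $ x $ y)" for x y
    using PAB_norm[OF p, of x y] PAB_norm[OF q, of x y] by (simp add: v_def pr_def)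
  have na: "v $ 0 $ 1 $ x $ 1 = v $ 0 $ 0 $ x $ 0 + v $ 0 $ 1 $ x $ 0 - v $ 0 $ 0 $ x $ 1" for x
    using PAB0_NS(1)[OF p, of 0 x 0 1] PAB0_NS(1)[OF q, of 0 x 0 1] by (simp add: v_def pr_def)
  have nb: "v $ 1 $ 0 $ 1 $ y = v $ 0 $ 0 $ 0 $ y + v $ 1 $ 0 $ 0 $ y - v $ 0 $ 0 $ 1 $ y" for y
    using PAB0_NS(2)[OF p, of 0 0 y 1] PAB0_NS(2)[OF q, of 0 0 y 1] by (simp add: v_def pr_def)
  have eq: "v = sum_list (map (\<lambda>k. crd k v *\<^sub>R w8 k) L8)"
    unfolding vec4_eq all2
    by (simp add: L8_def crd_def w8_def cmpl_def c01_def c10_def nv na nb)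
  have "sum_list (map (\<lambda>k. crd k v *\<^sub>R w8 k) L8) \<in> span (set (map w8 L8))"
    by (rule span_sum_list, rule span_scale, rule span_base) auto
  then show ?thesis using eq v_def by simp
qed



lemma lt7: "(i::nat) < 7 \<Longrightarrow> i = 0 \<or> i = 1 \<or> i = 2 \<or> i = 3 \<or> i = 4 \<or> i = 5 \<or> i = 6"
  by arith

definition labs0 :: "(nat \<times> nat \<times> nat \<times> nat) list" where
  "labs0 = [(0,0,0,1), (0,1,0,0), (0,1,1,0), (1,0,0,1), (1,0,1,1), (1,1,1,0), (1,1,1,1)]"

definition ks0 :: "(2 \<times> 2 \<times> 2 \<times> 2) list" where
  "ks0 = [(1,1,0,1), (1,1,1,0), (0,0,1,0), (0,0,0,1), (1,0,1,0), (0,1,0,1), (0,0,1,1)]"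

lemma face_ge7:
  shows "7 \<le> aff_dim {p \<in> PAB 0. ineq_lhs 0 p = 0 * (1 - 0)}"
proof -
  have "int 7 \<le> aff_dim {p \<in> PAB 0. ineq_lhs 0 p = 0 * (1 - 0)}"
  proof (rule aff_dim_ge[where Pz = "pt 0 (0,0,0,0)" and P = "\<lambda>i. pt 0 (labs0 ! i)" and g = "\<lambda>j. crd (ks0 ! j)"])
    show "pt 0 (0,0,0,0) \<in> {p \<in> PAB 0. ineq_lhs 0 p = 0 * (1 - 0)}"
      using pt_in[of 0] by (simp add: pt_lhs vtx_def)
    show "pt 0 (labs0 ! i) \<in> {p \<in> PAB 0. ineq_lhs 0 p = 0 * (1 - 0)}" if "i < 7" for i
      using pt_in[of 0] lt7[OF that] by (auto simp: labs0_def pt_lhs vtx_def)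
    show "linear (crd (ks0 ! j))" for j by (rule crd_linear)
    show "crd (ks0 ! j) (pt 0 (labs0 ! i) - pt 0 (0,0,0,0)) = 0" if "i < j" "j < 7" for i j
      using lt7[OF that(2)] lt7[of i] that
      by (auto simp: labs0_def ks0_def crd_def pt_comp mk2_def bt_def vtx_def)
    show "crd (ks0 ! i) (pt 0 (labs0 ! i) - pt 0 (0,0,0,0)) \<noteq> 0" if "i < 7" for i
      using lt7[OF that] by (auto simp: labs0_def ks0_def crd_def pt_comp mk2_def bt_def vtx_def)
  qed
  then show ?thesis by simp
qed

lemma affine_level: "affine {p. ineq_lhs e p = c}"
  unfolding affine_def
proof (intro ballI allI impI)
  fix x y u v assume x: "x \<in> {p. ineq_lhs e p = c}" and y: "y \<in> {p. ineq_lhs e p = c}" and uv: "u + v = (1::real)"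
  have "ineq_lhs e (u *\<^sub>R x + v *\<^sub>R y) = u * ineq_lhs e x + v * ineq_lhs e y"
    by (simp add: ineq_lhs_def pr_def algebra_simps)
  also have "\<dots> = (u + v) * c" using x y by (simp add: algebra_simps)
  finally show "u *\<^sub>R x + v *\<^sub>R y \<in> {p. ineq_lhs e p = c}" using uv by simp
qed

lemma face_lt:
  assumes e: "0 \<le> e" "e < 1"
  shows "aff_dim {p \<in> PAB e. ineq_lhs e p = e * (1 - e)} < aff_dim (PAB e)"
proof (rule aff_dim_psubset)
  let ?F = "{p \<in> PAB e. ineq_lhs e p = e * (1 - e)}"
  let ?q = "pt e (1,1,0,0)"
  have q: "?q \<in> PAB e" using pt_in e by simp
  have ql: "ineq_lhs e ?q \<noteq> e * (1 - e)"
  proof -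
    have "ineq_lhs e ?q = -1" by (simp add: pt_lhs vtx_def)
    moreover have "e * (1 - e) \<ge> 0" using e by simp
    ultimately show ?thesis by linarith
  qed
  have "affine hull ?F \<subseteq> {p. ineq_lhs e p = e * (1 - e)}"
    by (rule hull_minimal) (auto simp: affine_level)
  then have "?q \<notin> affine hull ?F" using ql by auto
  moreover have "?q \<in> affine hull (PAB e)" using q by (simp add: hull_inc)
  moreover have "affine hull ?F \<subseteq> affine hull (PAB e)" by (rule hull_mono) auto
  ultimately show "affine hull ?F \<subset> affine hull (PAB e)" by blast
qed

theorem mainTheorem6:
  fixes \<epsilon> :: real
  assumes "0 \<le> \<epsilon>" and "\<epsilon> < 1"
  shows "(\<forall>p\<in>PAB \<epsilon>. ineq_lhs \<epsilon> p \<le> \<epsilon> * (1 - \<epsilon>))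
    \<and> aff_dim {p \<in> PAB \<epsilon>. ineq_lhs \<epsilon> p = \<epsilon> * (1 - \<epsilon>)} = aff_dim (PAB \<epsilon>) - 1
    \<and> (0 < \<epsilon> \<longrightarrow> aff_dim (PAB \<epsilon>) = 12)"
proof -
  have V: "\<forall>p\<in>PAB \<epsilon>. ineq_lhs \<epsilon> p \<le> \<epsilon> * (1 - \<epsilon>)" using validity assms by blast
  have lt: "aff_dim {p \<in> PAB \<epsilon>. ineq_lhs \<epsilon> p = \<epsilon> * (1 - \<epsilon>)} < aff_dim (PAB \<epsilon>)"
    using face_lt assms by blast
  have base: "pt \<epsilon> (0,0,0,0) \<in> PAB \<epsilon>" using pt_in assms by simp
  show ?thesis
  proof (cases "\<epsilon> = 0")
    case True
    have up: "aff_dim (PAB \<epsilon>) \<le> int (length (map w8 L8))"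
      by (rule aff_dim_le[OF base]) (use span8 base True in auto)
    have lo: "7 \<le> aff_dim {p \<in> PAB \<epsilon>. ineq_lhs \<epsilon> p = \<epsilon> * (1 - \<epsilon>)}"
      using face_ge7 True by simp
    have "length (map w8 L8) = 8" by (simp add: L8_def)
    then show ?thesis using V up lo lt True by simp
  next
    case False
    then have e: "0 < \<epsilon>" using assms by simp
    have up: "aff_dim (PAB \<epsilon>) \<le> int (length (map w12 L12))"
      by (rule aff_dim_le[OF base]) (use span12 base in auto)
    have lo: "11 \<le> aff_dim {p \<in> PAB \<epsilon>. ineq_lhs \<epsilon> p = \<epsilon> * (1 - \<epsilon>)}"
      using face_ge11 e assms by simp
    have "length (map w12 L12) = 12" by (simp add: L12_def)
    then show ?thesis using V up lo lt e by simp
  qed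
qed

end
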